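(* Let $n$ be a positive integer such that $\gcd(n,7)=1$. Then: (i) if $\gcd(n,2)=1$, the families of $2$-constacyclic and $3$-constacyclic codes of length $n$ over $\mathbb{F}_7$ are monomially equivalent; (ii) if $\gcd(n,3)=1$, the families of $3$-constacyclic and $6$-constacyclic codes of length $n$ over $\mathbb{F}_7$ are monomially equivalent.
   Context: For $c\in\mathbb{F}_q^*$, a linear code $C\subseteq\mathbb{F}_q^n$ is called $c$-constacyclic if for every codeword $(c_0,c_1,\ldots,c_{n-1})\in C$ we also have $(c\, c_{n-1},c_0,\ldots,c_{n-2})\in C$. An isometry of linear codes is an $\mathbb{F}_q$-linear isomorphism preserving Hamming distance (equivalently, a map given by a monomial matrix). For $a,b\in\mathbb{F}_q^*$, the families of $a$-constacyclic and $b$-constacyclic codes of length $n$ over $\mathbb{F}_q$ are called monomially equivalent if there is a one-to-one correspondence between the set of $a$-constacyclic codes and the set of $b$-constacyclic codes of length $n$ given by an isometry of linear codes. *)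

theory Defs
  imports Main "HOL-Library.Numeral_Type"
begin

type_synonym F7 = 7

definition vecs :: "nat \<Rightarrow> F7 list set" where
  "vecs n = {xs. length xs = n}"

definition vadd :: "F7 list \<Rightarrow> F7 list \<Rightarrow> F7 list" where
  "vadd xs ys = map2 (+) xs ys"

definition vscale :: "F7 \<Rightarrow> F7 list \<Rightarrow> F7 list" where
  "vscale a xs = map ((*) a) xs"

definition linear_code :: "nat \<Rightarrow> F7 list set \<Rightarrow> bool" where
  "linear_code n C \<longleftrightarrow> C \<subseteq> vecs n \<and> replicate n 0 \<in> C \<and>
     (\<forall>x\<in>C. \<forall>y\<in>C. vadd x y \<in> C) \<and> (\<forall>a. \<forall>x\<in>C. vscale a x \<in> C)"

definition constashift :: "F7 \<Rightarrow> F7 list \<Rightarrow> F7 list" where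
  "constashift c xs = (if xs = [] then [] else (c * last xs) # butlast xs)"

definition constacyclic :: "nat \<Rightarrow> F7 \<Rightarrow> F7 list set \<Rightarrow> bool" where
  "constacyclic n c C \<longleftrightarrow> linear_code n C \<and> (\<forall>x\<in>C. constashift c x \<in> C)"

definition hamming_dist :: "F7 list \<Rightarrow> F7 list \<Rightarrow> nat" where
  "hamming_dist xs ys = card {i. i < length xs \<and> xs ! i \<noteq> ys ! i}"

definition isometry :: "nat \<Rightarrow> (F7 list \<Rightarrow> F7 list) \<Rightarrow> bool" where
  "isometry n f \<longleftrightarrow> bij_betw f (vecs n) (vecs n) \<and>
     (\<forall>x\<in>vecs n. \<forall>y\<in>vecs n. f (vadd x y) = vadd (f x) (f y)) \<and>
     (\<forall>a. \<forall>x\<in>vecs n. f (vscale a x) = vscale a (f x)) \<and>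
     (\<forall>x\<in>vecs n. \<forall>y\<in>vecs n. hamming_dist (f x) (f y) = hamming_dist x y)"

definition monomially_equivalent :: "nat \<Rightarrow> F7 \<Rightarrow> F7 \<Rightarrow> bool" where
  "monomially_equivalent n a b \<longleftrightarrow>
     (\<exists>f. isometry n f \<and>
        bij_betw (\<lambda>C. f ` C) {C. constacyclic n a C} {C. constacyclic n b C})"

end

theory Submission
  imports Defs
begin

definition diag :: "F7 \<Rightarrow> F7 list \<Rightarrow> F7 list" where
  "diag l x = map (\<lambda>i. l ^ i * x ! i) [0..<length x]"

lemma length_diag[simp]: "length (diag l x) = length x"
  by (simp add: diag_def)

lemma nth_diag[simp]: "i < length x \<Longrightarrow> diag l x ! i = l ^ i * x ! i"
  by (simp add: diag_def)

lemma length_vadd[simp]: "length (vadd x y) = min (length x) (length y)"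
  by (simp add: vadd_def)

lemma length_vscale[simp]: "length (vscale a x) = length x"
  by (simp add: vscale_def)

lemma vscale0: "vscale 0 z = replicate (length z) 0"
  by (induction z) (auto simp: vscale_def)

lemma linear_image:
  assumes vf: "\<forall>x\<in>vecs n. f x \<in> vecs n"
    and ad: "\<forall>x\<in>vecs n. \<forall>y\<in>vecs n. f (vadd x y) = vadd (f x) (f y)"
    and sc: "\<forall>a. \<forall>x\<in>vecs n. f (vscale a x) = vscale a (f x)"
    and L: "linear_code n C"
  shows "linear_code n (f ` C)"
proof -
  have sub: "C \<subseteq> vecs n" and z: "replicate n 0 \<in> C"
    and cadd: "\<forall>x\<in>C. \<forall>y\<in>C. vadd x y \<in> C" and csc: "\<forall>a. \<forall>x\<in>C. vscale a x \<in> C"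
    using L by (auto simp: linear_code_def)
  have zv: "replicate n 0 \<in> vecs n" by (simp add: vecs_def)
  have "f (vscale 0 (replicate n 0)) = vscale 0 (f (replicate n 0))" using sc zv by blast
  moreover have "vscale 0 (replicate n 0) = replicate n (0::F7)" by (simp add: vscale_def)
  moreover have "vscale 0 (f (replicate n 0)) = replicate n 0"
    using vf zv by (auto simp: vscale0 vecs_def)
  ultimately have fz: "f (replicate n 0) = replicate n 0" by simp
  show ?thesis unfolding linear_code_def
  proof (intro conjI ballI allI)
    show "f ` C \<subseteq> vecs n" using sub vf by auto
    show "replicate n 0 \<in> f ` C" using z fz by force
  next
    fix x y assume "x \<in> f ` C" "y \<in> f ` C"
    then obtain u v where uv: "u \<in> C" "v \<in> C" "x = f u" "y = f v" by auto
    have "u \<in> vecs n" "v \<in> vecs n" using sub uv by auto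
    then have "f (vadd u v) = vadd (f u) (f v)" using ad by blast
    then have "vadd x y = f (vadd u v)" using uv by simp
    moreover have "vadd u v \<in> C" using cadd uv by blast
    ultimately show "vadd x y \<in> f ` C" by (rule image_eqI)
  next
    fix a x assume "x \<in> f ` C"
    then obtain u where u: "u \<in> C" "x = f u" by auto
    then have "vscale a x = f (vscale a u)" using sc sub by auto
    moreover have "vscale a u \<in> C" using csc u by blast
    ultimately show "vscale a x \<in> f ` C" by (rule image_eqI)
  qed
qed

lemma transfer:
  assumes iso: "isometry n f"
    and g1: "\<forall>y\<in>vecs n. g y \<in> vecs n \<and> f (g y) = y"
    and g2: "\<forall>x\<in>vecs n. g (f x) = x"
    and fw: "\<And>C. constacyclic n a C \<Longrightarrow> constacyclic n b (f ` C)"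
    and bw: "\<And>D. constacyclic n b D \<Longrightarrow> constacyclic n a (g ` D)"
  shows "monomially_equivalent n a b"
  unfolding monomially_equivalent_def
proof (intro exI conjI)
  show "isometry n f" by fact
  show "bij_betw (\<lambda>C. f ` C) {C. constacyclic n a C} {C. constacyclic n b C}"
  proof (rule bij_betw_byWitness[where f'="\<lambda>D. g ` D"])
    show "\<forall>C\<in>{C. constacyclic n a C}. g ` f ` C = C"
    proof
      fix C assume "C \<in> {C. constacyclic n a C}"
      then have "C \<subseteq> vecs n" by (simp add: constacyclic_def linear_code_def)
      then show "g ` f ` C = C" using g2 by (force simp: image_image)
    qed
    show "\<forall>D\<in>{C. constacyclic n b C}. f ` g ` D = D"
    proof
      fix D assume "D \<in> {C. constacyclic n b C}"
      then have "D \<subseteq> vecs n" by (simp add: constacyclic_def linear_code_def)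
      then show "f ` g ` D = D" using g1 by (force simp: image_image)
    qed
    show "(\<lambda>C. f ` C) ` {C. constacyclic n a C} \<subseteq> {C. constacyclic n b C}" using fw by auto
    show "(\<lambda>D. g ` D) ` {C. constacyclic n b C} \<subseteq> {C. constacyclic n a C}" using bw by auto
  qed
qed

lemma me_trans:
  assumes "monomially_equivalent n a b" "monomially_equivalent n b c"
  shows "monomially_equivalent n a c"
proof -
  obtain f where f: "isometry n f"
    and bf: "bij_betw (\<lambda>C. f ` C) {C. constacyclic n a C} {C. constacyclic n b C}"
    using assms(1) by (auto simp: monomially_equivalent_def)
  obtain g where g: "isometry n g"
    and bg: "bij_betw (\<lambda>C. g ` C) {C. constacyclic n b C} {C. constacyclic n c C}"
    using assms(2) by (auto simp: monomially_equivalent_def)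
  have fv: "\<And>x. x \<in> vecs n \<Longrightarrow> f x \<in> vecs n" using f
    by (meson bij_betwE isometry_def)
  have "isometry n (g \<circ> f)"
    unfolding isometry_def
  proof (intro conjI ballI allI)
    show "bij_betw (g \<circ> f) (vecs n) (vecs n)"
      using f g by (auto simp: isometry_def intro: bij_betw_trans)
  next
    fix x y assume "x \<in> vecs n" "y \<in> vecs n"
    then show "(g \<circ> f) (vadd x y) = vadd ((g \<circ> f) x) ((g \<circ> f) y)"
      using f g fv by (simp add: isometry_def)
    show "hamming_dist ((g \<circ> f) x) ((g \<circ> f) y) = hamming_dist x y"
      using f g fv \<open>x \<in> vecs n\<close> \<open>y \<in> vecs n\<close> by (simp add: isometry_def)
  next
    fix a x assume "x \<in> vecs n"
    then show "(g \<circ> f) (vscale a x) = vscale a ((g \<circ> f) x)"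
      using f g fv by (simp add: isometry_def)
  qed
  moreover have "bij_betw ((\<lambda>C. g ` C) \<circ> (\<lambda>C. f ` C)) {C. constacyclic n a C} {C. constacyclic n c C}"
    using bf bg by (rule bij_betw_trans)
  moreover have "((\<lambda>C. g ` C) \<circ> (\<lambda>C. f ` C)) = (\<lambda>C. (g \<circ> f) ` C)"
    by (auto simp: fun_eq_iff image_comp)
  ultimately show ?thesis unfolding monomially_equivalent_def by metis
qed

lemma rev_shift_inv:
  assumes "c * a = (1::F7)"
  shows "rev (constashift c (rev (constashift a y))) = y"
proof (cases "y = []")
  case True then show ?thesis by (simp add: constashift_def)
next
  case False
  have "c * (a * last y) = last y" using assms by (simp add: mult.assoc[symmetric])
  then show ?thesis using False by (simp add: constashift_def)
qed

lemma vecs_finite: "finite (vecs n)"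
proof -
  have "vecs n = {xs::F7 list. set xs \<subseteq> UNIV \<and> length xs = n}" by (auto simp: vecs_def)
  then show ?thesis using finite_lists_length_eq[of "UNIV::F7 set" n] by simp
qed

lemma rev_iso: "isometry n rev"
  unfolding isometry_def
proof (intro conjI ballI allI)
  show "bij_betw rev (vecs n) (vecs n)"
    by (rule bij_betw_byWitness[where f'=rev]) (auto simp: vecs_def)
next
  fix x y assume x: "x \<in> vecs n" and y: "y \<in> vecs n"
  then have len: "length x = n" "length y = n" by (auto simp: vecs_def)
  show "rev (vadd x y) = vadd (rev x) (rev y)"
    using len by (simp add: vadd_def rev_map zip_rev)
  have "{i. i < length (rev x) \<and> rev x ! i \<noteq> rev y ! i}
      = (\<lambda>i. n - Suc i) ` {i. i < length x \<and> x ! i \<noteq> y ! i}"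
  proof (rule set_eqI, rule iffI)
    fix i assume "i \<in> {i. i < length (rev x) \<and> rev x ! i \<noteq> rev y ! i}"
    then have "i < n" "x ! (n - Suc i) \<noteq> y ! (n - Suc i)" using len by (auto simp: rev_nth)
    then show "i \<in> (\<lambda>i. n - Suc i) ` {i. i < length x \<and> x ! i \<noteq> y ! i}"
      using len by (intro image_eqI[where x="n - Suc i"]) auto
  next
    fix i assume "i \<in> (\<lambda>i. n - Suc i) ` {i. i < length x \<and> x ! i \<noteq> y ! i}"
    then obtain j where "j < n" "x ! j \<noteq> y ! j" "i = n - Suc j" using len by auto
    then show "i \<in> {i. i < length (rev x) \<and> rev x ! i \<noteq> rev y ! i}"
      using len by (auto simp: rev_nth Suc_diff_Suc)
  qed
  moreover have "inj_on (\<lambda>i. n - Suc i) {i. i < length x \<and> x ! i \<noteq> y ! i}"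
    using len by (auto simp: inj_on_def)
  ultimately show "hamming_dist (rev x) (rev y) = hamming_dist x y"
    unfolding hamming_dist_def by (simp add: card_image)
next
  fix a x assume "x \<in> vecs n"
  show "rev (vscale a x) = vscale a (rev x)" by (simp add: vscale_def rev_map)
qed

lemma rev_cc:
  assumes ca: "c * a = (1::F7)" and C: "constacyclic n a C"
  shows "constacyclic n c (rev ` C)"
proof -
  have L: "linear_code n C" and sh: "\<forall>x\<in>C. constashift a x \<in> C"
    using C by (auto simp: constacyclic_def)
  have sub: "C \<subseteq> vecs n" using L by (simp add: linear_code_def)
  have LL: "linear_code n (rev ` C)"
    by (rule linear_image) (use rev_iso L in \<open>auto simp: isometry_def bij_betw_def vecs_def\<close>)
  have inj: "inj_on (constashift a) C"
    by (rule inj_onI) (metis rev_shift_inv ca)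
  have fin: "finite C" using sub vecs_finite by (rule finite_subset)
  have eq: "constashift a ` C = C"
    using endo_inj_surj[OF fin _ inj] sh by auto
  have "constashift c (rev x) \<in> rev ` C" if "x \<in> C" for x
  proof -
    obtain y where y: "y \<in> C" "x = constashift a y" using eq \<open>x \<in> C\<close> by force
    have "constashift c (rev x) = rev y"
      using rev_shift_inv[OF ca, of y] y(2) by (metis rev_rev_ident)
    then show ?thesis using y by auto
  qed
  then show ?thesis using LL by (auto simp: constacyclic_def)
qed

lemma me_rev:
  assumes "c * a = (1::F7)"
  shows "monomially_equivalent n a c"
proof (rule transfer[where g=rev])
  show "isometry n rev" by (rule rev_iso)
  show "\<forall>y\<in>vecs n. rev y \<in> vecs n \<and> rev (rev y) = y" by (simp add: vecs_def)
  show "\<forall>x\<in>vecs n. rev (rev x) = x" by simp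
  show "constacyclic n c (rev ` C)" if "constacyclic n a C" for C
    using rev_cc[OF assms that] .
  have "a * c = 1" using assms by (simp add: mult.commute)
  then show "constacyclic n a (rev ` D)" if "constacyclic n c D" for D
    using rev_cc that by blast
qed

lemma diag_inv:
  assumes "l * m = (1::F7)"
  shows "diag m (diag l x) = x"
proof (rule nth_equalityI)
  show "length (diag m (diag l x)) = length x" by simp
  fix i assume "i < length (diag m (diag l x))"
  then have "i < length x" by simp
  moreover have "m ^ i * (l ^ i * x ! i) = (l * m) ^ i * x ! i"
    by (simp add: power_mult_distrib algebra_simps)
  ultimately show "diag m (diag l x) ! i = x ! i" using assms by simp
qed

lemma diag_cancel:
  assumes lm: "l * m = (1::F7)"
  shows "m ^ i * (l ^ i * u) = u"
proof -
  have "m ^ i * (l ^ i * u) = (l * m) ^ i * u" by (simp add: power_mult_distrib algebra_simps)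
  then show ?thesis using lm by simp
qed

lemma diag_iso:
  assumes lm: "l * m = (1::F7)"
  shows "isometry n (diag l)"
  unfolding isometry_def
proof (intro conjI ballI allI)
  have ml: "m * l = 1" using lm by (simp add: mult.commute)
  show "bij_betw (diag l) (vecs n) (vecs n)"
  proof (rule bij_betw_byWitness[where f'="diag m"])
    show "\<forall>a\<in>vecs n. diag m (diag l a) = a" using diag_inv[OF lm] by blast
    show "\<forall>a\<in>vecs n. diag l (diag m a) = a" using diag_inv[OF ml] by blast
    show "diag l ` vecs n \<subseteq> vecs n" by (auto simp: vecs_def)
    show "diag m ` vecs n \<subseteq> vecs n" by (auto simp: vecs_def)
  qed
next
  fix x y assume "x \<in> vecs n" "y \<in> vecs n"
  then have len: "length x = n" "length y = n" by (auto simp: vecs_def)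
  show "diag l (vadd x y) = vadd (diag l x) (diag l y)"
  proof (rule nth_equalityI)
    show "length (diag l (vadd x y)) = length (vadd (diag l x) (diag l y))" by simp
    fix i assume "i < length (diag l (vadd x y))"
    then have i: "i < n" using len by simp
    then show "diag l (vadd x y) ! i = vadd (diag l x) (diag l y) ! i"
      using len by (simp add: vadd_def distrib_left)
  qed
  have ci: "(l ^ i * x ! i = l ^ i * y ! i) = (x ! i = y ! i)" for i
  proof
    assume h: "l ^ i * x ! i = l ^ i * y ! i"
    have "x ! i = m ^ i * (l ^ i * x ! i)" using diag_cancel[OF lm] by simp
    also have "\<dots> = m ^ i * (l ^ i * y ! i)" using h by simp
    also have "\<dots> = y ! i" using diag_cancel[OF lm] by simp
    finally show "x ! i = y ! i" .
  qed simp
  have "{i. i < length (diag l x) \<and> diag l x ! i \<noteq> diag l y ! i} = {i. i < length x \<and> x ! i \<noteq> y ! i}"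
  proof (rule Collect_cong)
    fix i
    show "(i < length (diag l x) \<and> diag l x ! i \<noteq> diag l y ! i) = (i < length x \<and> x ! i \<noteq> y ! i)"
    proof (cases "i < length x")
      case True
      then have "diag l x ! i = l ^ i * x ! i" "diag l y ! i = l ^ i * y ! i" using len by simp_all
      then show ?thesis using True ci[of i] by simp
    next
      case False then show ?thesis by simp
    qed
  qed
  then show "hamming_dist (diag l x) (diag l y) = hamming_dist x y"
    unfolding hamming_dist_def by simp
next
  fix a x assume "x \<in> vecs n"
  show "diag l (vscale a x) = vscale a (diag l x)"
  proof (rule nth_equalityI)
    show "length (diag l (vscale a x)) = length (vscale a (diag l x))" by simp
    fix i assume "i < length (diag l (vscale a x))"
    then show "diag l (vscale a x) ! i = vscale a (diag l x) ! i"
      by (simp add: vscale_def mult.left_commute)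
  qed
qed

lemma diag_shift:
  assumes lm: "l * m = (1::F7)" and ab: "a = b * l ^ n" and len: "length x = n"
  shows "constashift b (diag l x) = diag l (vscale m (constashift a x))"
proof (cases "n = 0")
  case True then show ?thesis using len by (simp add: constashift_def diag_def vscale_def)
next
  case False
  then have ne: "x \<noteq> []" using len by auto
  have dne: "diag l x \<noteq> []" using ne by (metis length_diag length_0_conv)
  show ?thesis
  proof (rule nth_equalityI)
    show "length (constashift b (diag l x)) = length (diag l (vscale m (constashift a x)))"
      using ne dne by (simp add: constashift_def)
    fix i assume "i < length (constashift b (diag l x))"
    then have i: "i < n" using dne len False by (simp add: constashift_def)
    show "constashift b (diag l x) ! i = diag l (vscale m (constashift a x)) ! i"
    proof (cases i)
      case 0
      have n1: "n - 1 < length x" using len False by simp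
      have "last (diag l x) = diag l x ! (n - 1)" using last_conv_nth[OF dne] len by simp
      then have "last (diag l x) = l ^ (n - 1) * x ! (n - 1)" using n1 by simp
      moreover have "l ^ n = l * l ^ (n - 1)" using False by (metis power_Suc Suc_pred' neq0_conv)
      moreover have "last x = x ! (n - 1)" using ne len by (simp add: last_conv_nth)
      moreover have lmz: "m * (b * (l * z)) = b * z" for z
      proof -
        have "m * (b * (l * z)) = b * ((l * m) * z)" by (simp add: algebra_simps)
        then show ?thesis using lm by simp
      qed
      ultimately show ?thesis using 0 ne dne len ab
        by (simp add: constashift_def vscale_def mult.assoc lmz)
    next
      case (Suc j)
      have "l ^ Suc j * (m * x ! j) = (l * m) * (l ^ j * x ! j)" by (simp add: algebra_simps)
      then show ?thesis using Suc ne dne len i lm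
        by (simp add: constashift_def vscale_def nth_butlast nth_Cons)
    qed
  qed
qed

lemma diag_cc:
  assumes lm: "l * m = (1::F7)" and ab: "a = b * l ^ n" and C: "constacyclic n a C"
  shows "constacyclic n b (diag l ` C)"
proof -
  have L: "linear_code n C" and sh: "\<forall>x\<in>C. constashift a x \<in> C"
    using C by (auto simp: constacyclic_def)
  have sub: "C \<subseteq> vecs n" using L by (simp add: linear_code_def)
  have LL: "linear_code n (diag l ` C)"
    by (rule linear_image) (use diag_iso[OF lm] L in \<open>auto simp: isometry_def bij_betw_def vecs_def\<close>)
  have "constashift b (diag l x) \<in> diag l ` C" if "x \<in> C" for x
  proof -
    have "length x = n" using sub that by (auto simp: vecs_def)
    then have "constashift b (diag l x) = diag l (vscale m (constashift a x))"
      using diag_shift[OF lm ab] by blast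
    moreover have "vscale m (constashift a x) \<in> C"
      using L sh that by (auto simp: linear_code_def)
    ultimately show ?thesis by auto
  qed
  then show ?thesis using LL by (auto simp: constacyclic_def)
qed

lemma me_diag:
  assumes lm: "l * m = (1::F7)" and ab: "a = b * l ^ n"
  shows "monomially_equivalent n a b"
proof (rule transfer[where g="diag m"])
  have ml: "m * l = 1" using lm by (simp add: mult.commute)
  show "isometry n (diag l)" by (rule diag_iso[OF lm])
  show "\<forall>y\<in>vecs n. diag m y \<in> vecs n \<and> diag l (diag m y) = y"
    using ml by (simp add: vecs_def diag_inv)
  show "\<forall>x\<in>vecs n. diag m (diag l x) = x" using lm by (simp add: diag_inv)
  show "constacyclic n b (diag l ` C)" if "constacyclic n a C" for C
    using diag_cc[OF lm ab that] .
  have "a * m ^ n = b * (l * m) ^ n" using ab by (simp add: power_mult_distrib algebra_simps)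
  then have "b = a * m ^ n" using lm by simp
  then show "constacyclic n a (diag m ` D)" if "constacyclic n b D" for D
    using diag_cc[OF ml _ that] by blast
qed

theorem proposition4p4:
  fixes n :: nat
  assumes "n > 0" and "coprime n 7"
  shows "(coprime n 2 \<longrightarrow> monomially_equivalent n 2 3) \<and>
         (coprime n 3 \<longrightarrow> monomially_equivalent n 3 6)"
proof (intro conjI impI)
  assume "coprime n 2"
  then have odd: "odd n" by simp
  then obtain k where k: "n = 2 * k + 1" using oddE by blast
  have s2: "(6::F7) ^ 2 = 1" by simp
  have "(6::F7) ^ n = (6 ^ 2) ^ k * 6" using k by (simp only: power_add power_mult power_one_right)
  then have p: "(6::F7) ^ n = 6" by (simp only: s2 power_one mult_1)
  have "monomially_equivalent n 2 4" by (rule me_rev) simp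
  moreover have "monomially_equivalent n 4 3"
    by (rule me_diag[where l=6 and m=6]) (simp_all add: p)
  ultimately show "monomially_equivalent n 2 3" by (rule me_trans)
next
  assume c3: "coprime n 3"
  have "n mod 3 \<noteq> 0"
  proof
    assume "n mod 3 = 0"
    then have "3 dvd n" by auto
    then have "is_unit (3::nat)" using coprime_common_divisor[OF c3] by simp
    then show False by simp
  qed
  then have "n mod 3 = 1 \<or> n mod 3 = 2" by arith
  moreover have pw: "(p::F7) ^ n = p ^ (n mod 3)" if "p ^ 3 = 1" for p
  proof -
    have "p ^ n = p ^ (3 * (n div 3) + n mod 3)" by simp
    also have "\<dots> = p ^ (n mod 3)" by (simp only: power_add power_mult that) simp
    finally show ?thesis .
  qed
  ultimately show "monomially_equivalent n 3 6"
  proof (elim disjE)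
    assume h: "n mod 3 = 1"
    have "(4::F7) ^ n = 4" using pw[of 4] h by simp
    then show ?thesis by (intro me_diag[where l=4 and m=2]) simp_all
  next
    assume h: "n mod 3 = 2"
    have "(2::F7) ^ n = 4" using pw[of 2] h by simp
    then show ?thesis by (intro me_diag[where l=2 and m=4]) simp_all
  qed
qed

end
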